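(* Let $\Gamma=(G,\sigma)$ be a signed graph on $n$ vertices. Let $L_1,\dots,L_n$ be its cut-off adjacency eigenvalues with respect to an edge weight $w$ and vertex measure $\mu$, and $L'_1,\dots,L'_n$ those with respect to another edge weight $w'$ and vertex measure $\mu'$. Then $\#\{k:L_k=0\}=\#\{k:L'_k=0\}$.
   Context: $G=(V,E)$ is a finite undirected graph without self-loops, $V=\{1,\dots,n\}$. A signed graph $\Gamma=(G,\sigma)$ has signature $\sigma:E\to\{\pm1\}$, edge weight $w:E\to(0,\infty)$, vertex measure $\mu:V\to(0,\infty)$, potential $\kappa:V\to\mathbb R$. For $p\ge1$ and nonzero $f$, $\mathcal R_p^\sigma(f)=\frac{\sum_{\{i,j\}\in E}w_{ij}|f(i)-\sigma_{ij}f(j)|^p+\sum_i\kappa_i|f(i)|^p}{\sum_i\mu_i|f(i)|^p}$; $\mathcal S_p=\{f:\sum_i\mu_i|f(i)|^p=1\}$; Krasnoselskii genus $\gamma(B)$ of closed symmetric $B\subset\mathbb R^n\setminus\{0\}$: least $k$ with an odd continuous map $B\to\mathbb R^k\setminus\{0\}$; $\mathcal F_k(\mathcal S_p)$ = closed symmetric $B\subset\mathcal S_p$ with $\gamma(B)\ge k$; $\lambda_k^{(p)}=\min_{B\in\mathcal F_k(\mathcal S_p)}\max_{f\in B}\mathcal R_p^\sigma(f)$. Cut-off adjacency eigenvalues: $L_k:=\lim_{p\to\infty}2^{-p}\lambda_k^{(p)}$ (limits exist, independent of $\kappa$). *)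

theory Defs
  imports "HOL-Analysis.Analysis" "HOL-Library.Extended_Nat"
begin

text \<open>Vertices are the elements of a finite type 'v (so n = CARD('v)); functions
f : V \<rightarrow> R are vectors real^'v.  The target R^k of the genus is modelled as the
subspace of (nat \<Rightarrow> real) (product topology) of functions vanishing outside {..<k}.\<close>

definition Rk :: "nat \<Rightarrow> (nat \<Rightarrow> real) set" where
  "Rk k = {y. \<forall>i\<ge>k. y i = 0}"

definition has_odd_map_to :: "(real^'v) set \<Rightarrow> nat \<Rightarrow> bool" where
  "has_odd_map_to B k \<longleftrightarrow> (\<exists>g :: real^'v \<Rightarrow> (nat \<Rightarrow> real).
      continuous_on B g \<and> g ` B \<subseteq> Rk k - {\<lambda>_. 0} \<and> (\<forall>x\<in>B. g (- x) = (\<lambda>i. - g x i)))"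

definition genus :: "(real^'v) set \<Rightarrow> enat" where
  "genus B = (if \<exists>k. has_odd_map_to B k then enat (LEAST k. has_odd_map_to B k) else \<infinity>)"

text \<open>Signed graph: E is a symmetric irreflexive edge relation (each undirected edge
{i,j} appears as (i,j) and (j,i)); w, sigma are symmetric on E.\<close>
definition signed_graph ::
  "('v \<times> 'v) set \<Rightarrow> ('v \<Rightarrow> 'v \<Rightarrow> real) \<Rightarrow> bool" where
  "signed_graph E \<sigma> \<longleftrightarrow> sym E \<and> (\<forall>i. (i, i) \<notin> E) \<and>
     (\<forall>(i,j)\<in>E. \<sigma> i j = \<sigma> j i \<and> (\<sigma> i j = 1 \<or> \<sigma> i j = -1))"

definition admissible_weight :: "('v \<times> 'v) set \<Rightarrow> ('v \<Rightarrow> 'v \<Rightarrow> real) \<Rightarrow> bool" where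
  "admissible_weight E w \<longleftrightarrow> (\<forall>(i,j)\<in>E. w i j = w j i \<and> w i j > 0)"

definition measure_pos :: "('v \<Rightarrow> real) \<Rightarrow> bool" where
  "measure_pos \<mu> \<longleftrightarrow> (\<forall>i. \<mu> i > 0)"

text \<open>p-Rayleigh quotient; the sum over undirected edges is half the sum over E.\<close>
definition rayleigh ::
  "('v::finite \<times> 'v) set \<Rightarrow> ('v \<Rightarrow> 'v \<Rightarrow> real) \<Rightarrow> ('v \<Rightarrow> 'v \<Rightarrow> real) \<Rightarrow> ('v \<Rightarrow> real)
   \<Rightarrow> ('v \<Rightarrow> real) \<Rightarrow> real \<Rightarrow> real^'v \<Rightarrow> real" where
  "rayleigh E \<sigma> w \<mu> \<kappa> p f =
     ((1/2) * (\<Sum>(i,j)\<in>E. w i j * \<bar>f $ i - \<sigma> i j * f $ j\<bar> powr p)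
       + (\<Sum>i\<in>UNIV. \<kappa> i * \<bar>f $ i\<bar> powr p))
     / (\<Sum>i\<in>UNIV. \<mu> i * \<bar>f $ i\<bar> powr p)"

definition sphere_p :: "('v::finite \<Rightarrow> real) \<Rightarrow> real \<Rightarrow> (real^'v) set" where
  "sphere_p \<mu> p = {f. (\<Sum>i\<in>UNIV. \<mu> i * \<bar>f $ i\<bar> powr p) = 1}"

definition genus_family :: "('v::finite \<Rightarrow> real) \<Rightarrow> real \<Rightarrow> nat \<Rightarrow> (real^'v) set set" where
  "genus_family \<mu> p k = {B. B \<subseteq> sphere_p \<mu> p \<and> closed B \<and> (\<forall>x\<in>B. - x \<in> B)
                             \<and> genus B \<ge> enat k}"

text \<open>Variational eigenvalue lambda_k^(p) (min-max; min/max attained, written Inf/Sup).\<close>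
definition var_eigenvalue ::
  "('v::finite \<times> 'v) set \<Rightarrow> ('v \<Rightarrow> 'v \<Rightarrow> real) \<Rightarrow> ('v \<Rightarrow> 'v \<Rightarrow> real) \<Rightarrow> ('v \<Rightarrow> real)
   \<Rightarrow> ('v \<Rightarrow> real) \<Rightarrow> real \<Rightarrow> nat \<Rightarrow> real" where
  "var_eigenvalue E \<sigma> w \<mu> \<kappa> p k =
     Inf ((\<lambda>B. Sup (rayleigh E \<sigma> w \<mu> \<kappa> p ` B)) ` genus_family \<mu> p k)"

definition cutoff_eigenvalue ::
  "('v::finite \<times> 'v) set \<Rightarrow> ('v \<Rightarrow> 'v \<Rightarrow> real) \<Rightarrow> ('v \<Rightarrow> 'v \<Rightarrow> real) \<Rightarrow> ('v \<Rightarrow> real)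
   \<Rightarrow> ('v \<Rightarrow> real) \<Rightarrow> nat \<Rightarrow> real" where
  "cutoff_eigenvalue E \<sigma> w \<mu> \<kappa> k =
     Lim at_top (\<lambda>p::real. 2 powr (- p) * var_eigenvalue E \<sigma> w \<mu> \<kappa> p k)"

end

theory Submission
  imports Defs
begin


lemma has_odd_map_image:
  fixes h :: "real^'a \<Rightarrow> real^'b"
  assumes "continuous_on B h" "\<forall>x\<in>B. h (-x) = - h x" "has_odd_map_to (h ` B) m"
  shows "has_odd_map_to B m"
proof -
  from assms(3) obtain g :: "real^'b \<Rightarrow> (nat \<Rightarrow> real)" where
    g: "continuous_on (h ` B) g" "g ` (h ` B) \<subseteq> Rk m - {\<lambda>_. 0}" "\<forall>x\<in>h ` B. g (- x) = (\<lambda>i. - g x i)"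
    unfolding has_odd_map_to_def by blast
  have "continuous_on B (g \<circ> h)" using continuous_on_compose[OF assms(1) g(1)] .
  moreover have "(g \<circ> h) ` B \<subseteq> Rk m - {\<lambda>_. 0}" using g(2) by auto
  moreover have "\<forall>x\<in>B. (g \<circ> h) (- x) = (\<lambda>i. - (g \<circ> h) x i)"
    using g(3) assms(2) by auto
  ultimately show ?thesis unfolding has_odd_map_to_def by blast
qed

lemma genus_image:
  fixes h :: "real^'a \<Rightarrow> real^'b"
  assumes "continuous_on B h" "\<forall>x\<in>B. h (-x) = - h x"
  shows "genus B \<le> genus (h ` B)"
proof (cases "\<exists>k. has_odd_map_to (h ` B) k")
  case True
  then obtain k where k: "has_odd_map_to (h ` B) k" by blast
  let ?m = "LEAST k. has_odd_map_to (h ` B) k"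
  have hm: "has_odd_map_to (h ` B) ?m" using k by (rule LeastI)
  hence hB: "has_odd_map_to B ?m" using has_odd_map_image assms by blast
  hence "(LEAST k. has_odd_map_to B k) \<le> ?m" by (rule Least_le)
  thus ?thesis using True hB unfolding genus_def by auto
next
  case False
  thus ?thesis unfolding genus_def by auto
qed

lemma genus_empty: "genus ({} :: (real^'a) set) = 0"
proof -
  have "has_odd_map_to ({} :: (real^'a) set) 0" unfolding has_odd_map_to_def by auto
  hence "(LEAST k. has_odd_map_to ({} :: (real^'a) set) k) = 0" by (simp add: Least_eq_0)
  thus ?thesis unfolding genus_def using \<open>has_odd_map_to {} 0\<close> by (auto simp: zero_enat_def)
qed

lemma genus_family_nonempty:
  fixes B :: "(real^'a::finite) set"
  assumes "B \<in> genus_family \<mu> p k" "k \<ge> 1"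
  shows "B \<noteq> {}"
  proof
  assume "B = {}"
  hence "enat k \<le> genus ({} :: (real^'a) set)" using assms unfolding genus_family_def by auto
  hence "enat k \<le> enat 0" unfolding genus_empty by (simp add: zero_enat_def)
  thus False using assms(2) by simp
qed

lemma mm_lower:
  fixes F :: "real^'a \<Rightarrow> real"
  assumes "Fam \<noteq> {}" "\<forall>B\<in>Fam. B \<noteq> {} \<and> B \<subseteq> S" "\<forall>x\<in>S. lo \<le> F x \<and> F x \<le> hi"
  shows "lo \<le> Inf ((\<lambda>B. Sup (F ` B)) ` Fam)"
proof (rule cInf_greatest)
  show "(\<lambda>B. Sup (F ` B)) ` Fam \<noteq> {}" using assms(1) by auto
  fix y assume "y \<in> (\<lambda>B. Sup (F ` B)) ` Fam"
  then obtain B where B: "B \<in> Fam" "y = Sup (F ` B)" by auto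
  then obtain x where x: "x \<in> B" using assms(2) by blast
  have "bdd_above (F ` B)" using assms(2,3) B(1) by (intro bdd_aboveI[of _ hi]) blast
  hence "F x \<le> Sup (F ` B)" using x by (intro cSup_upper) auto
  moreover have "lo \<le> F x" using x B assms by blast
  ultimately show "lo \<le> y" using B by simp
qed

lemma mm_compare:
  fixes Fa Fb :: "real^'a \<Rightarrow> real"
  assumes "Fama \<noteq> {}" "\<forall>B\<in>Fama. h ` B \<in> Famb"
   "\<forall>B\<in>Famb. B \<noteq> {} \<and> B \<subseteq> Sb" "\<forall>x\<in>Sb. lob \<le> Fb x \<and> Fb x \<le> hib"
   "\<forall>B\<in>Fama. B \<noteq> {} \<and> B \<subseteq> Sa" "\<forall>x\<in>Sa. Fa x \<le> hia"
   "\<forall>x\<in>Sa. Fb (h x) \<le> c * Fa x + d" "c > 0"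
 shows "Inf ((\<lambda>B. Sup (Fb ` B)) ` Famb) \<le> c * Inf ((\<lambda>B. Sup (Fa ` B)) ` Fama) + d"
proof -
  define m2 where "m2 = Inf ((\<lambda>B. Sup (Fb ` B)) ` Famb)"
  have bb: "bdd_below ((\<lambda>B. Sup (Fb ` B)) ` Famb)"
  proof (rule bdd_belowI)
    fix y assume "y \<in> (\<lambda>B. Sup (Fb ` B)) ` Famb"
    then obtain B where B: "B \<in> Famb" "y = Sup (Fb ` B)" by auto
    then obtain x where x: "x \<in> B" using assms(3) by blast
    have "bdd_above (Fb ` B)" using assms(3,4) B(1) by (intro bdd_aboveI[of _ hib]) blast
    hence "Fb x \<le> Sup (Fb ` B)" using x by (intro cSup_upper) auto
    moreover have "lob \<le> Fb x" using x B assms by blast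
    ultimately show "lob \<le> y" using B by simp
  qed
  have key: "(m2 - d) / c \<le> Sup (Fa ` B)" if B: "B \<in> Fama" for B
  proof -
    have hB: "h ` B \<in> Famb" using assms(2) B by blast
    have "m2 \<le> Sup (Fb ` h ` B)" unfolding m2_def using hB bb by (intro cInf_lower) auto
    also have "Sup (Fb ` h ` B) \<le> c * Sup (Fa ` B) + d"
    proof (rule cSup_least)
      show "Fb ` h ` B \<noteq> {}" using assms(5) B by blast
      fix y assume "y \<in> Fb ` h ` B"
      then obtain x where x: "x \<in> B" "y = Fb (h x)" by auto
      have "bdd_above (Fa ` B)" using assms(5,6) B by (intro bdd_aboveI[of _ hia]) blast
      hence "Fa x \<le> Sup (Fa ` B)" using x by (intro cSup_upper) auto
      hence "c * Fa x \<le> c * Sup (Fa ` B)" using assms(8) by simp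
      moreover have "Fb (h x) \<le> c * Fa x + d" using assms(5,7) B x by blast
      ultimately show "y \<le> c * Sup (Fa ` B) + d" using x by simp
    qed
    finally show ?thesis using assms(8) by (simp add: pos_divide_le_eq mult.commute)
  qed
  have "(m2 - d) / c \<le> Inf ((\<lambda>B. Sup (Fa ` B)) ` Fama)"
    using assms(1) key by (intro cInf_greatest) auto
  thus ?thesis using assms(8) unfolding m2_def by (simp add: pos_divide_le_eq mult.commute)
qed



lemma powr_subadd:
  fixes x y s :: real
  assumes "0 < s" "s \<le> 1" "0 \<le> x" "0 \<le> y"
  shows "(x + y) powr s \<le> x powr s + y powr s"
proof (cases "x + y = 0")
  case True
  then show ?thesis using assms by simp
next
  case False
  define S where "S = x + y"
  have S: "S > 0" using False assms unfolding S_def by simp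
  have t1: "x / S \<le> (x / S) powr s"
  proof -
    have "(x/S) powr 1 \<le> (x / S) powr s"
      using assms S by (intro powr_mono') (auto simp: S_def field_simps)
    thus ?thesis using assms S by simp
  qed
  have t2: "y / S \<le> (y / S) powr s"
  proof -
    have "(y/S) powr 1 \<le> (y / S) powr s"
      using assms S by (intro powr_mono') (auto simp: S_def field_simps)
    thus ?thesis using assms S by simp
  qed
  have e1: "x powr s = (x/S) powr s * S powr s" using S assms by (simp add: powr_divide)
  have e2: "y powr s = (y/S) powr s * S powr s" using S assms by (simp add: powr_divide)
  have e3: "x powr s + y powr s = ((x/S) powr s + (y/S) powr s) * S powr s"
    using e1 e2 by (simp add: algebra_simps)
  have e4: "x/S + y/S = 1" using S unfolding S_def by (simp add: add_divide_distrib[symmetric])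
  have e5: "(x/S) powr s + (y/S) powr s \<ge> 1"
    using t1 t2 e4 by linarith
  have "S powr s \<le> x powr s + y powr s"
    using mult_right_mono[OF e5 powr_ge_zero[of S s]] e3 by simp
  thus ?thesis unfolding S_def .
qed

lemma powr_diff_le:
  fixes x y s :: real
  assumes "0 < s" "s \<le> 1" "0 \<le> x" "0 \<le> y"
  shows "\<bar>x powr s - y powr s\<bar> \<le> \<bar>x - y\<bar> powr s"
proof (cases "y \<le> x")
  case True
  have "x powr s = ((x - y) + y) powr s" by simp
  also have "\<dots> \<le> (x - y) powr s + y powr s" using assms True by (intro powr_subadd) auto
  finally have "x powr s - y powr s \<le> \<bar>x - y\<bar> powr s" using True by simp
  moreover have "y powr s \<le> x powr s" using True assms by (intro powr_mono2) auto
  ultimately show ?thesis by simp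
next
  case False
  have "y powr s = ((y - x) + x) powr s" by simp
  also have "\<dots> \<le> (y - x) powr s + x powr s" using assms False by (intro powr_subadd) auto
  finally have "y powr s - x powr s \<le> \<bar>x - y\<bar> powr s" using False by simp
  moreover have "x powr s \<le> y powr s" using False assms by (intro powr_mono2) auto
  ultimately show ?thesis by simp
qed

lemma powr_mean_le:
  fixes x y s :: real
  assumes "0 < s" "s \<le> 1" "0 \<le> x" "0 \<le> y"
  shows "x powr s + y powr s \<le> 2 powr (1 - s) * (x + y) powr s"
proof -
  have two: "1 \<le> 2 powr (1 - s)" using assms by (intro ge_one_powr_ge_zero) auto
  show ?thesis
  proof (cases "x = 0 \<or> y = 0")
    case True
    then show ?thesis using two assms
      by (auto intro: order_trans[OF _ mult_right_mono[OF two]])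
  next
    case False
    hence xy: "x > 0" "y > 0" using assms by auto
    define c where "c = (x + y) / 2"
    have c: "c > 0" using xy unfolding c_def by simp
    have y1: "x powr s * c powr (1 - s) \<le> s * x + (1 - s) * c"
      using assms xy c by (intro Youngs_inequality_0) auto
    have y2: "y powr s * c powr (1 - s) \<le> s * y + (1 - s) * c"
      using assms xy c by (intro Youngs_inequality_0) auto
    have "(x powr s + y powr s) * c powr (1 - s) \<le> (s * x + (1 - s) * c) + (s * y + (1 - s) * c)"
      using add_mono[OF y1 y2] by (simp add: algebra_simps)
    also have "\<dots> = 2 * c" unfolding c_def by (simp add: algebra_simps)
    finally have "(x powr s + y powr s) * c powr (1 - s) \<le> 2 * c" .
    hence "(x powr s + y powr s) * c powr (1 - s) * c powr s \<le> 2 * c * c powr s"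
      by (simp add: mult_right_mono)
    moreover have "c powr (1 - s) * c powr s = c"
      using c by (simp add: powr_add[symmetric])
    ultimately have "(x powr s + y powr s) * c \<le> 2 * c * c powr s"
      by (simp add: mult.assoc)
    hence "x powr s + y powr s \<le> 2 * c powr s" using c by (simp add: mult.commute)
    also have "2 * c powr s = 2 powr (1 - s) * (x + y) powr s"
    proof -
      have "c powr s = (x + y) powr s / 2 powr s" unfolding c_def using xy by (simp add: powr_divide)
      moreover have "2 powr (1 - s) = 2 / 2 powr s" by (simp add: powr_diff)
      ultimately show ?thesis by simp
    qed
    finally show ?thesis .
  qed
qed

definition phi :: "real \<Rightarrow> real \<Rightarrow> real" where
  "phi s x = sgn x * \<bar>x\<bar> powr s"

lemma phi_minus: "phi s (- x) = - phi s x"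
  unfolding phi_def by simp

lemma abs_phi: "0 < s \<Longrightarrow> \<bar>phi s x\<bar> = \<bar>x\<bar> powr s"
  unfolding phi_def by (cases "x = 0") (auto simp: abs_mult abs_sgn_eq)

lemma phi_pos: "0 \<le> x \<Longrightarrow> phi s x = x powr s"
  unfolding phi_def by (cases "x = 0") auto

lemma phi_neg: "x \<le> 0 \<Longrightarrow> phi s x = - ((- x) powr s)"
  unfolding phi_def by (cases "x = 0") auto

lemma phi_if: "0 < s \<Longrightarrow> phi s x = (if x \<le> 0 then - (\<bar>x\<bar> powr s) else \<bar>x\<bar> powr s)"
  using phi_pos[of x s] phi_neg[of x s] by auto

lemma continuous_on_phi: "0 < s \<Longrightarrow> continuous_on UNIV (phi s)"
proof -
  assume s: "0 < s"
  have "continuous_on UNIV (\<lambda>x::real. if x \<le> 0 then - (\<bar>x\<bar> powr s) else \<bar>x\<bar> powr s)"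
    using s by (intro continuous_on_cases_le continuous_intros continuous_on_powr') auto
  thus ?thesis using phi_if[OF s] by simp
qed

lemma phi_holder:
  assumes "0 < s" "s \<le> 1"
  shows "\<bar>phi s a - phi s c\<bar> \<le> 2 powr (1 - s) * \<bar>a - c\<bar> powr s"
proof -
  have two: "1 \<le> 2 powr (1 - s)" using assms by (intro ge_one_powr_ge_zero) auto
  have gen: "\<bar>u powr s - v powr s\<bar> \<le> 2 powr (1 - s) * \<bar>u - v\<bar> powr s" if "0 \<le> u" "0 \<le> v" for u v
  proof -
    have "\<bar>u powr s - v powr s\<bar> \<le> \<bar>u - v\<bar> powr s" using assms that by (rule powr_diff_le)
    also have "\<dots> \<le> 2 powr (1 - s) * \<bar>u - v\<bar> powr s" using two by (simp add: mult_le_cancel_right1)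
    finally show ?thesis .
  qed
  consider "0 \<le> a" "0 \<le> c" | "a \<le> 0" "c \<le> 0" | "0 \<le> a" "c \<le> 0" | "a \<le> 0" "0 \<le> c" by linarith
  then show ?thesis
  proof cases
    case 1 thus ?thesis using gen[of a c] by (simp add: phi_pos)
  next
    case 2 thus ?thesis using gen[of "-a" "-c"] by (simp add: phi_neg abs_minus_commute)
  next
    case 3
    have "phi s a - phi s c = a powr s + (-c) powr s" using 3 by (simp add: phi_pos phi_neg)
    also have "\<dots> \<le> 2 powr (1 - s) * (a + (-c)) powr s" using 3 assms by (intro powr_mean_le) auto
    finally show ?thesis using 3 by (simp add: phi_pos phi_neg powr_ge_zero)
  next
    case 4
    have "phi s c - phi s a = c powr s + (-a) powr s" using 4 by (simp add: phi_pos phi_neg)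
    also have "\<dots> \<le> 2 powr (1 - s) * (c + (-a)) powr s" using 4 assms by (intro powr_mean_le) auto
    finally show ?thesis using 4 by (simp add: phi_pos phi_neg powr_ge_zero abs_minus_commute)
  qed
qed



definition Phi :: "real \<Rightarrow> real^'v \<Rightarrow> real^'v" where
  "Phi s f = (\<chi> i. phi s (f$i))"

definition Sc :: "('v::finite \<Rightarrow> real) \<Rightarrow> real \<Rightarrow> real^'v \<Rightarrow> real^'v" where
  "Sc \<mu>' p f = ((\<Sum>i\<in>UNIV. \<mu>' i * \<bar>f$i\<bar> powr p) powr (-1/p)) *\<^sub>R f"

definition num :: "('v::finite \<times> 'v) set \<Rightarrow> ('v\<Rightarrow>'v\<Rightarrow>real) \<Rightarrow> ('v\<Rightarrow>'v\<Rightarrow>real) \<Rightarrow> real \<Rightarrow> real^'v \<Rightarrow> real" where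
  "num E \<sigma> w p f = (1/2) * (\<Sum>(i,j)\<in>E. w i j * \<bar>f$i - \<sigma> i j * f$j\<bar> powr p)"

definition ksum :: "('v::finite \<Rightarrow> real) \<Rightarrow> real \<Rightarrow> real^'v \<Rightarrow> real" where
  "ksum \<kappa> p f = (\<Sum>i\<in>UNIV. \<kappa> i * \<bar>f$i\<bar> powr p)"

lemma rayleigh_sphere:
  "f \<in> sphere_p \<mu> p \<Longrightarrow> rayleigh E \<sigma> w \<mu> \<kappa> p f = num E \<sigma> w p f + ksum \<kappa> p f"
  unfolding rayleigh_def sphere_p_def num_def ksum_def by simp

lemma sphere_coord_pow:
  assumes "measure_pos \<mu>" "f \<in> sphere_p \<mu> p"
  shows "\<bar>f$i\<bar> powr p \<le> 1 / \<mu> i"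
proof -
  have "\<mu> i * \<bar>f$i\<bar> powr p \<le> (\<Sum>j\<in>UNIV. \<mu> j * \<bar>f$j\<bar> powr p)"
    using assms(1) unfolding measure_pos_def
    by (intro member_le_sum) (auto, metis less_imp_le mult_nonneg_nonneg powr_ge_zero)
  also have "\<dots> = 1" using assms(2) unfolding sphere_p_def by simp
  finally show ?thesis using assms(1) unfolding measure_pos_def
    by (simp add: pos_le_divide_eq mult.commute)
qed

lemma sphere_coord:
  assumes "measure_pos \<mu>" "f \<in> sphere_p \<mu> p" "1 \<le> p"
  shows "\<bar>f$i\<bar> \<le> 1 + 1 / \<mu> i"
proof (cases "\<bar>f$i\<bar> \<le> 1")
  case True
  then show ?thesis using assms(1) unfolding measure_pos_def by (smt (verit) divide_pos_pos)
next
  case False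
  have "\<bar>f$i\<bar> = \<bar>f$i\<bar> powr 1" by simp
  also have "\<dots> \<le> \<bar>f$i\<bar> powr p" using False assms(3) by (intro powr_mono) auto
  also have "\<dots> \<le> 1 / \<mu> i" by (rule sphere_coord_pow[OF assms(1,2)])
  finally show ?thesis by simp
qed

lemma sphere_bounded:
  assumes "measure_pos \<mu>" "1 \<le> p"
  shows "bounded (sphere_p \<mu> p :: (real^'v::finite) set)"
proof -
  have "norm f \<le> (\<Sum>i\<in>UNIV. 1 + 1 / \<mu> i)" if "f \<in> sphere_p \<mu> p" for f :: "real^'v"
  proof -
    have "norm f \<le> (\<Sum>i\<in>UNIV. \<bar>f$i\<bar>)" by (rule norm_le_l1_cart)
    also have "\<dots> \<le> (\<Sum>i\<in>UNIV. 1 + 1 / \<mu> i)"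
      using sphere_coord[OF assms(1) that assms(2)] by (intro sum_mono) auto
    finally show ?thesis .
  qed
  thus ?thesis unfolding bounded_iff by blast
qed

lemma sphere_sum_pos:
  assumes "measure_pos \<mu>'" "f \<in> sphere_p \<mu> p"
  shows "(\<Sum>i\<in>UNIV. \<mu>' i * \<bar>f$i\<bar> powr p) > 0"
proof -
  have "\<exists>i. f$i \<noteq> 0"
  proof (rule ccontr)
    assume "\<not> ?thesis"
    hence "(\<Sum>i\<in>UNIV. \<mu> i * \<bar>f$i\<bar> powr p) = 0" by simp
    thus False using assms(2) unfolding sphere_p_def by simp
  qed
  then obtain i where i: "f$i \<noteq> 0" by blast
  have "0 < \<mu>' i * \<bar>f$i\<bar> powr p" using i assms(1) unfolding measure_pos_def by simp
  also have "\<dots> \<le> (\<Sum>i\<in>UNIV. \<mu>' i * \<bar>f$i\<bar> powr p)"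
    using assms(1) unfolding measure_pos_def
    by (intro member_le_sum) (auto, metis less_imp_le mult_nonneg_nonneg powr_ge_zero)
  finally show ?thesis .
qed

definition Kc :: "('v::finite \<Rightarrow> real) \<Rightarrow> ('v \<Rightarrow> real) \<Rightarrow> real" where
  "Kc \<mu> \<kappa> = (\<Sum>i\<in>UNIV. \<bar>\<kappa> i\<bar> / \<mu> i)"

lemma ksum_bound:
  assumes "measure_pos \<mu>" "f \<in> sphere_p \<mu> p"
  shows "\<bar>ksum \<kappa> p f\<bar> \<le> Kc \<mu> \<kappa>"
proof -
  have "\<bar>ksum \<kappa> p f\<bar> \<le> (\<Sum>i\<in>UNIV. \<bar>\<kappa> i * \<bar>f$i\<bar> powr p\<bar>)"
    unfolding ksum_def by (rule sum_abs)
  also have "\<dots> \<le> (\<Sum>i\<in>UNIV. \<bar>\<kappa> i\<bar> / \<mu> i)"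
  proof (intro sum_mono)
    fix i
    have "\<bar>\<kappa> i\<bar> * \<bar>f$i\<bar> powr p \<le> \<bar>\<kappa> i\<bar> * (1 / \<mu> i)"
      using sphere_coord_pow[OF assms] by (intro mult_left_mono) auto
    thus "\<bar>\<kappa> i * \<bar>f$i\<bar> powr p\<bar> \<le> \<bar>\<kappa> i\<bar> / \<mu> i" by (simp add: abs_mult)
  qed
  finally show ?thesis unfolding Kc_def .
qed

lemma num_nonneg:
  assumes "admissible_weight E w"
  shows "0 \<le> num E \<sigma> w p f"
proof -
  have "0 \<le> (\<Sum>(i,j)\<in>E. w i j * \<bar>f$i - \<sigma> i j * f$j\<bar> powr p)"
  proof (rule sum_nonneg)
    fix x assume "x \<in> E"
    then obtain i j where x: "x = (i,j)" "(i,j) \<in> E" by (cases x) auto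
    have "w i j > 0" using assms x(2) unfolding admissible_weight_def by auto
    thus "0 \<le> (case x of (i, j) \<Rightarrow> w i j * \<bar>f$i - \<sigma> i j * f$j\<bar> powr p)" using x by simp
  qed
  thus ?thesis unfolding num_def by simp
qed

definition Hn :: "('v::finite \<times> 'v) set \<Rightarrow> ('v\<Rightarrow>'v\<Rightarrow>real) \<Rightarrow> ('v \<Rightarrow> real) \<Rightarrow> real \<Rightarrow> real" where
  "Hn E w \<mu> p = (1/2) * (\<Sum>(i,j)\<in>E. w i j * ((1 + 1/\<mu> i) + (1 + 1/\<mu> j)) powr p)"

lemma num_upper:
  assumes "signed_graph E \<sigma>" "admissible_weight E w" "measure_pos \<mu>" "f \<in> sphere_p \<mu> p" "1 \<le> p"
  shows "num E \<sigma> w p f \<le> Hn E w \<mu> p"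
proof -
  have "(\<Sum>(i,j)\<in>E. w i j * \<bar>f$i - \<sigma> i j * f$j\<bar> powr p)
        \<le> (\<Sum>(i,j)\<in>E. w i j * ((1 + 1/\<mu> i) + (1 + 1/\<mu> j)) powr p)"
  proof (rule sum_mono)
    fix x assume "x \<in> E"
    then obtain i j where x: "x = (i,j)" "(i,j) \<in> E" by (cases x) auto
    have w: "w i j > 0" using assms(2) x(2) unfolding admissible_weight_def by auto
    have sg: "\<sigma> i j = 1 \<or> \<sigma> i j = -1" using assms(1) x(2) unfolding signed_graph_def by auto
    have "\<bar>f$i - \<sigma> i j * f$j\<bar> \<le> \<bar>f$i\<bar> + \<bar>f$j\<bar>" using sg by auto
    also have "\<dots> \<le> (1 + 1/\<mu> i) + (1 + 1/\<mu> j)"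
      using sphere_coord[OF assms(3,4,5)] by (intro add_mono) auto
    finally have "\<bar>f$i - \<sigma> i j * f$j\<bar> powr p \<le> ((1 + 1/\<mu> i) + (1 + 1/\<mu> j)) powr p"
      using assms(5) by (intro powr_mono2) auto
    thus "(case x of (i, j) \<Rightarrow> w i j * \<bar>f$i - \<sigma> i j * f$j\<bar> powr p)
         \<le> (case x of (i, j) \<Rightarrow> w i j * ((1 + 1/\<mu> i) + (1 + 1/\<mu> j)) powr p)"
      using x w by (simp add: mult_left_mono)
  qed
  thus ?thesis unfolding num_def Hn_def by simp
qed

lemma rayleigh_bounds:
  assumes "signed_graph E \<sigma>" "admissible_weight E w" "measure_pos \<mu>" "f \<in> sphere_p \<mu> p" "1 \<le> p"
  shows "- Kc \<mu> \<kappa> \<le> rayleigh E \<sigma> w \<mu> \<kappa> p f \<and> rayleigh E \<sigma> w \<mu> \<kappa> p f \<le> Hn E w \<mu> p + Kc \<mu> \<kappa>"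
  using rayleigh_sphere[OF assms(4)] num_nonneg[OF assms(2)] num_upper[OF assms]
    ksum_bound[OF assms(3,4), of \<kappa>]
  by (smt (verit))

lemma transfer_family:
  fixes h :: "real^'v::finite \<Rightarrow> real^'v"
  assumes "1 \<le> p" "measure_pos \<mu>" "continuous_on (sphere_p \<mu> p) h"
    "\<forall>x\<in>sphere_p \<mu> p. h (-x) = - h x" "h ` sphere_p \<mu> p \<subseteq> sphere_p \<mu>' q"
    "B \<in> genus_family \<mu> p k"
  shows "h ` B \<in> genus_family \<mu>' q k"
proof -
  have B: "B \<subseteq> sphere_p \<mu> p" "closed B" "\<forall>x\<in>B. - x \<in> B" "genus B \<ge> enat k"
    using assms(6) unfolding genus_family_def by auto
  have "compact B" using B(1,2) bounded_subset[OF sphere_bounded[OF assms(2,1)]]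
    by (simp add: compact_eq_bounded_closed)
  moreover have cB: "continuous_on B h" using continuous_on_subset[OF assms(3) B(1)] .
  ultimately have "compact (h ` B)" using compact_continuous_image by blast
  hence "closed (h ` B)" by (rule compact_imp_closed)
  moreover have "h ` B \<subseteq> sphere_p \<mu>' q" using assms(5) B(1) by blast
  moreover have "\<forall>x\<in>h ` B. - x \<in> h ` B"
  proof
    fix y assume "y \<in> h ` B"
    then obtain x where x: "x \<in> B" "y = h x" by auto
    have "- y = h (- x)" using assms(4) B(1) x by auto
    thus "- y \<in> h ` B" using B(3) x(1) by auto
  qed
  moreover have "genus (h ` B) \<ge> enat k"
    using genus_image[OF cB] assms(4) B(1,4) by (meson order_trans subsetD)
  ultimately show ?thesis unfolding genus_family_def by auto
qed



lemma ksum_zero[simp]: "ksum (\<lambda>_. 0) p f = 0" unfolding ksum_def by simp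

lemma Phi_minus: "Phi s (- f) = - Phi s f"
  unfolding Phi_def by (simp add: vec_eq_iff phi_minus)

lemma Phi_cont: "0 < s \<Longrightarrow> continuous_on S (Phi s)"
  unfolding Phi_def
  by (intro continuous_on_vec_lambda continuous_on_compose2[OF continuous_on_phi]) (auto intro: continuous_intros)

lemma Phi_sphere:
  assumes "0 < p" "0 < q" "f \<in> sphere_p \<mu> p"
  shows "Phi (p/q) f \<in> sphere_p \<mu> q"
proof -
  have "\<bar>Phi (p/q) f $ i\<bar> powr q = \<bar>f$i\<bar> powr p" for i
    using assms by (simp add: Phi_def abs_phi powr_powr)
  thus ?thesis using assms(3) unfolding sphere_p_def by simp
qed

lemma Phi_num:
  assumes "signed_graph E \<sigma>" "admissible_weight E w" "0 < p" "p \<le> q"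
  shows "num E \<sigma> w q (Phi (p/q) f) \<le> 2 powr (q - p) * num E \<sigma> w p f"
proof -
  define s where "s = p / q"
  have s: "0 < s" "s \<le> 1" using assms(3,4) unfolding s_def by auto
  have sq: "(1 - s) * q = q - p" "s * q = p" using assms(3,4) unfolding s_def by (auto simp: field_simps)
  have "(\<Sum>(i,j)\<in>E. w i j * \<bar>Phi s f$i - \<sigma> i j * Phi s f$j\<bar> powr q)
        \<le> (\<Sum>(i,j)\<in>E. 2 powr (q - p) * (w i j * \<bar>f$i - \<sigma> i j * f$j\<bar> powr p))"
  proof (rule sum_mono)
    fix x assume "x \<in> E"
    then obtain i j where x: "x = (i,j)" "(i,j) \<in> E" by (cases x) auto
    have w: "w i j > 0" using assms(2) x(2) unfolding admissible_weight_def by auto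
    have sg: "\<sigma> i j = 1 \<or> \<sigma> i j = -1" using assms(1) x(2) unfolding signed_graph_def by auto
    have e: "\<sigma> i j * phi s (f$j) = phi s (\<sigma> i j * f$j)" using sg phi_minus by auto
    have "\<bar>Phi s f$i - \<sigma> i j * Phi s f$j\<bar> = \<bar>phi s (f$i) - phi s (\<sigma> i j * f$j)\<bar>"
      unfolding Phi_def using e by simp
    also have "\<dots> \<le> 2 powr (1 - s) * \<bar>f$i - \<sigma> i j * f$j\<bar> powr s" by (rule phi_holder[OF s])
    finally have "\<bar>Phi s f$i - \<sigma> i j * Phi s f$j\<bar> powr q
        \<le> (2 powr (1 - s) * \<bar>f$i - \<sigma> i j * f$j\<bar> powr s) powr q"
      using assms by (intro powr_mono2) auto
    also have "\<dots> = 2 powr (q - p) * \<bar>f$i - \<sigma> i j * f$j\<bar> powr p"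
      by (simp add: powr_mult powr_powr sq)
    finally show "(case x of (i, j) \<Rightarrow> w i j * \<bar>Phi s f$i - \<sigma> i j * Phi s f$j\<bar> powr q)
        \<le> (case x of (i, j) \<Rightarrow> 2 powr (q - p) * (w i j * \<bar>f$i - \<sigma> i j * f$j\<bar> powr p))"
      using x w by (simp add: mult_left_mono mult.left_commute)
  qed
  also have "\<dots> = 2 powr (q - p) * (\<Sum>(i,j)\<in>E. w i j * \<bar>f$i - \<sigma> i j * f$j\<bar> powr p)"
    by (simp add: sum_distrib_left case_prod_unfold)
  finally show ?thesis unfolding num_def s_def by simp
qed

definition Ssum :: "('v::finite \<Rightarrow> real) \<Rightarrow> real \<Rightarrow> real^'v \<Rightarrow> real" where
  "Ssum \<mu>' p f = (\<Sum>i\<in>UNIV. \<mu>' i * \<bar>f$i\<bar> powr p)"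

lemma Sc_alt: "Sc \<mu>' p f = (Ssum \<mu>' p f powr (-1/p)) *\<^sub>R f"
  unfolding Sc_def Ssum_def ..

lemma Ssum_minus: "Ssum \<mu>' p (- f) = Ssum \<mu>' p f"
  unfolding Ssum_def by simp

lemma Sc_minus: "Sc \<mu>' p (- f) = - Sc \<mu>' p f"
  unfolding Sc_alt Ssum_minus by simp

lemma Ssum_cont: "0 < p \<Longrightarrow> continuous_on S (Ssum \<mu>' p)"
  unfolding Ssum_def
  by (intro continuous_intros continuous_on_powr') (auto intro: continuous_intros)

lemma Sc_cont:
  assumes "measure_pos \<mu>'" "0 < p"
  shows "continuous_on (sphere_p \<mu> p) (Sc \<mu>' p)"
proof -
  have pos: "\<forall>f\<in>sphere_p \<mu> p. Ssum \<mu>' p f > 0"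
    using sphere_sum_pos[OF assms(1)] unfolding Ssum_def by blast
  have "continuous_on (sphere_p \<mu> p) (\<lambda>f. Ssum \<mu>' p f powr (-1/p))"
    by (rule continuous_on_powr'[OF Ssum_cont[OF assms(2)] continuous_on_const]) (use pos in force)
  thus ?thesis unfolding Sc_alt by (intro continuous_on_scaleR continuous_on_id)
qed

lemma Sc_coord_pow:
  assumes "0 < p" "Ssum \<mu>' p f > 0"
  shows "\<bar>Sc \<mu>' p f $ i - c * Sc \<mu>' p f $ j\<bar> powr p = \<bar>f$i - c * f$j\<bar> powr p / Ssum \<mu>' p f"
proof -
  define t where "t = Ssum \<mu>' p f powr (-1/p)"
  have t: "t > 0" using assms unfolding t_def by simp
  have tp0: "t powr p = Ssum \<mu>' p f powr (-1)"
    using assms unfolding t_def by (simp add: powr_powr)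
  have tp: "t powr p = 1 / Ssum \<mu>' p f"
    unfolding tp0 using assms by (simp add: powr_minus_divide)
  have "\<bar>Sc \<mu>' p f $ i - c * Sc \<mu>' p f $ j\<bar> = t * \<bar>f$i - c * f$j\<bar>"
  proof -
    have "Sc \<mu>' p f $ i - c * Sc \<mu>' p f $ j = t * (f$i - c * f$j)"
      unfolding Sc_alt t_def[symmetric] by (simp add: algebra_simps)
    thus ?thesis using t by (simp add: abs_mult)
  qed
  thus ?thesis using t tp by (simp add: powr_mult)
qed

lemma Sc_sphere:
  assumes "measure_pos \<mu>'" "0 < p" "f \<in> sphere_p \<mu> p"
  shows "Sc \<mu>' p f \<in> sphere_p \<mu>' p"
proof -
  have S: "Ssum \<mu>' p f > 0" using sphere_sum_pos[OF assms(1,3)] unfolding Ssum_def .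
  have "\<bar>Sc \<mu>' p f $ i\<bar> powr p = \<bar>f$i\<bar> powr p / Ssum \<mu>' p f" for i
    using Sc_coord_pow[OF assms(2) S, of i 0 i] by simp
  hence "(\<Sum>i\<in>UNIV. \<mu>' i * \<bar>Sc \<mu>' p f $ i\<bar> powr p) = (\<Sum>i\<in>UNIV. \<mu>' i * \<bar>f $ i\<bar> powr p) / Ssum \<mu>' p f"
    by (simp add: sum_divide_distrib)
  hence "(\<Sum>i\<in>UNIV. \<mu>' i * \<bar>Sc \<mu>' p f $ i\<bar> powr p) = Ssum \<mu>' p f / Ssum \<mu>' p f"
    unfolding Ssum_def .
  thus ?thesis using S unfolding sphere_p_def by simp
qed

lemma Sc_num:
  assumes "measure_pos \<mu>'" "0 < p" "f \<in> sphere_p \<mu> p"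
  shows "num E \<sigma> w' p (Sc \<mu>' p f) = num E \<sigma> w' p f / Ssum \<mu>' p f"
proof -
  have S: "Ssum \<mu>' p f > 0" using sphere_sum_pos[OF assms(1,3)] unfolding Ssum_def .
  have "(\<Sum>(i,j)\<in>E. w' i j * \<bar>Sc \<mu>' p f$i - \<sigma> i j * Sc \<mu>' p f$j\<bar> powr p)
     = (\<Sum>(i,j)\<in>E. w' i j * \<bar>f$i - \<sigma> i j * f$j\<bar> powr p) / Ssum \<mu>' p f"
    using Sc_coord_pow[OF assms(2) S] by (simp add: sum_divide_distrib case_prod_unfold)
  thus ?thesis unfolding num_def by simp
qed

definition cw :: "('v::finite \<times> 'v) set \<Rightarrow> ('v\<Rightarrow>'v\<Rightarrow>real) \<Rightarrow> ('v\<Rightarrow>'v\<Rightarrow>real) \<Rightarrow> real" where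
  "cw E w w' = 1 + (\<Sum>(i,j)\<in>E. w' i j / w i j)"

definition cmu :: "('v::finite \<Rightarrow> real) \<Rightarrow> ('v \<Rightarrow> real) \<Rightarrow> real" where
  "cmu \<mu> \<mu>' = Min (range (\<lambda>i. \<mu>' i / \<mu> i))"

lemma w_ratio_nonneg:
  assumes "admissible_weight E w" "admissible_weight E w'" "x \<in> E"
  shows "0 \<le> w' (fst x) (snd x) / w (fst x) (snd x)"
proof -
  obtain a b where x: "x = (a,b)" by (cases x)
  have "w a b > 0" "w' a b > 0" using assms x unfolding admissible_weight_def by auto
  thus ?thesis using x by simp
qed

lemma cw_pos: "admissible_weight E w \<Longrightarrow> admissible_weight E w' \<Longrightarrow> cw E w w' > 0"
proof -
  assume a: "admissible_weight E w" "admissible_weight E w'"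
  have "0 \<le> (\<Sum>(i,j)\<in>E. w' i j / w i j)"
    using w_ratio_nonneg[OF a] by (intro sum_nonneg) (auto simp: case_prod_unfold)
  thus ?thesis unfolding cw_def by simp
qed

lemma cw_bound:
  assumes "admissible_weight E w" "admissible_weight E w'" "(i,j) \<in> E"
  shows "w' i j \<le> cw E w w' * w i j"
proof -
  have fin: "finite E" by simp
  have "w' i j / w i j \<le> (\<Sum>(i,j)\<in>E. w' i j / w i j)"
    using assms(3) member_le_sum[OF _ _ fin, of "(i,j)" "\<lambda>x. w' (fst x) (snd x) / w (fst x) (snd x)"]
      w_ratio_nonneg[OF assms(1,2)] by (auto simp: case_prod_unfold)
  hence "w' i j / w i j \<le> cw E w w'" unfolding cw_def by simp
  moreover have "w i j > 0" using assms unfolding admissible_weight_def by auto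
  ultimately show ?thesis by (simp add: divide_le_eq)
qed

lemma cmu_pos: "measure_pos \<mu> \<Longrightarrow> measure_pos \<mu>' \<Longrightarrow> cmu \<mu> \<mu>' > 0"
  unfolding cmu_def measure_pos_def by (subst Min_gr_iff) auto

lemma cmu_bound: "measure_pos \<mu> \<Longrightarrow> cmu \<mu> \<mu>' * \<mu> i \<le> \<mu>' i"
proof -
  assume a: "measure_pos \<mu>"
  have "cmu \<mu> \<mu>' \<le> \<mu>' i / \<mu> i" unfolding cmu_def by (intro Min_le) auto
  thus ?thesis using a unfolding measure_pos_def by (simp add: le_divide_eq)
qed

lemma Sc_rayleigh:
  assumes "admissible_weight E w" "admissible_weight E w'" "measure_pos \<mu>" "measure_pos \<mu>'"
    "0 < p" "f \<in> sphere_p \<mu> p"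
  shows "rayleigh E \<sigma> w' \<mu>' (\<lambda>_. 0) p (Sc \<mu>' p f)
       \<le> (cw E w w' / cmu \<mu> \<mu>') * rayleigh E \<sigma> w \<mu> (\<lambda>_. 0) p f"
proof -
  have S: "Ssum \<mu>' p f \<ge> cmu \<mu> \<mu>'"
  proof -
    have "cmu \<mu> \<mu>' = cmu \<mu> \<mu>' * (\<Sum>i\<in>UNIV. \<mu> i * \<bar>f$i\<bar> powr p)"
      using assms(6) unfolding sphere_p_def by simp
    also have "\<dots> = (\<Sum>i\<in>UNIV. (cmu \<mu> \<mu>' * \<mu> i) * \<bar>f$i\<bar> powr p)"
      by (simp add: sum_distrib_left mult.assoc)
    also have "\<dots> \<le> Ssum \<mu>' p f" unfolding Ssum_def
      using cmu_bound[OF assms(3)] by (intro sum_mono mult_right_mono) auto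
    finally show ?thesis .
  qed
  have cm: "cmu \<mu> \<mu>' > 0" using cmu_pos assms(3,4) by blast
  have N: "num E \<sigma> w' p f \<le> cw E w w' * num E \<sigma> w p f"
  proof -
    have "(\<Sum>(i,j)\<in>E. w' i j * \<bar>f$i - \<sigma> i j * f$j\<bar> powr p)
        \<le> (\<Sum>(i,j)\<in>E. cw E w w' * (w i j * \<bar>f$i - \<sigma> i j * f$j\<bar> powr p))"
      using cw_bound[OF assms(1,2)]
      by (intro sum_mono) (auto simp: case_prod_unfold mult.assoc[symmetric] intro!: mult_right_mono)
    also have "\<dots> = cw E w w' * (\<Sum>(i,j)\<in>E. w i j * \<bar>f$i - \<sigma> i j * f$j\<bar> powr p)"
      by (simp add: sum_distrib_left case_prod_unfold)
    finally show ?thesis unfolding num_def by simp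
  qed
  have n0: "0 \<le> num E \<sigma> w' p f" by (rule num_nonneg[OF assms(2)])
  have "rayleigh E \<sigma> w' \<mu>' (\<lambda>_. 0) p (Sc \<mu>' p f) = num E \<sigma> w' p f / Ssum \<mu>' p f"
    using rayleigh_sphere[OF Sc_sphere[OF assms(4,5,6)]] Sc_num[OF assms(4,5,6)] by simp
  also have "\<dots> \<le> num E \<sigma> w' p f / cmu \<mu> \<mu>'"
    using S cm n0 by (intro divide_left_mono) auto
  also have "\<dots> \<le> cw E w w' * num E \<sigma> w p f / cmu \<mu> \<mu>'"
    using N cm by (intro divide_right_mono) auto
  also have "\<dots> = (cw E w w' / cmu \<mu> \<mu>') * rayleigh E \<sigma> w \<mu> (\<lambda>_. 0) p f"
    using rayleigh_sphere[OF assms(6)] by simp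
  finally show ?thesis .
qed



lemma two_powr_neg_lim: "((\<lambda>p::real. 2 powr (-p)) \<longlongrightarrow> 0) at_top"
proof -
  have a: "filterlim (\<lambda>p::real. p * ln 2) at_top at_top"
    by (rule filterlim_at_top_mult_tendsto_pos[OF tendsto_const]) (auto simp: filterlim_ident)
  have b: "filterlim (\<lambda>p::real. exp (p * ln 2)) at_top at_top"
    by (rule filterlim_compose[OF exp_at_top a])
  have "((\<lambda>p::real. inverse (exp (p * ln 2))) \<longlongrightarrow> 0) at_top"
    by (rule filterlim_compose[OF tendsto_inverse_0 filterlim_mono[OF b at_top_le_at_infinity order_refl]])
  moreover have "2 powr (-p) = inverse (exp (p * ln 2))" for p :: real
    by (simp add: powr_def exp_minus)
  ultimately show ?thesis by simp
qed

lemma mono_lim: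
  fixes h :: "real \<Rightarrow> real"
  assumes "\<And>p q. p0 \<le> p \<Longrightarrow> p \<le> q \<Longrightarrow> h q \<le> h p" "\<And>p. p0 \<le> p \<Longrightarrow> 0 \<le> h p"
  shows "\<exists>L. (h \<longlongrightarrow> L) at_top \<and> 0 \<le> L"
proof -
  define L where "L = Inf (h ` {p0..})"
  have bb: "bdd_below (h ` {p0..})" using assms(2) by (intro bdd_belowI[of _ 0]) auto
  have ne: "h ` {p0..} \<noteq> {}" by auto
  have L0: "0 \<le> L" unfolding L_def using assms(2) ne by (intro cInf_greatest) auto
  have Lle: "L \<le> h p" if "p0 \<le> p" for p unfolding L_def using bb that by (intro cInf_lower) auto
  have "(h \<longlongrightarrow> L) at_top"
  proof (rule order_tendstoI)
    fix a assume "a < L"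
    thus "eventually (\<lambda>p. a < h p) at_top"
      using Lle by (intro eventually_at_top_linorderI[of p0]) (auto intro: less_le_trans)
  next
    fix a assume "L < a"
    then obtain y where y: "y \<in> h ` {p0..}" "y < a" using cInf_lessD[OF ne] unfolding L_def by blast
    then obtain p1 where p1: "p0 \<le> p1" "h p1 < a" by auto
    show "eventually (\<lambda>p. h p < a) at_top"
      using p1 assms(1) by (intro eventually_at_top_linorderI[of p1]) (auto intro: le_less_trans)
  qed
  thus ?thesis using L0 by blast
qed

context
  fixes E :: "('v::finite \<times> 'v) set" and \<sigma> :: "'v \<Rightarrow> 'v \<Rightarrow> real" and k :: nat
  assumes sg: "signed_graph E \<sigma>" and k1: "1 \<le> k"
begin

lemma fam_mono_p:
  fixes \<mu> :: "'v \<Rightarrow> real"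
  assumes "measure_pos \<mu>" "1 \<le> p" "p \<le> q" "genus_family \<mu> p k \<noteq> {}"
  shows "genus_family \<mu> q k \<noteq> {}"
proof -
  obtain B where B: "B \<in> genus_family \<mu> p k" using assms(4) by blast
  have "Phi (p/q) ` B \<in> genus_family \<mu> q k"
    using assms by (intro transfer_family[OF assms(2,1) _ _ _ B] Phi_cont)
      (auto simp: Phi_minus intro: Phi_sphere)
  thus ?thesis by blast
qed

lemma fam_mu:
  fixes \<mu> \<mu>' :: "'v \<Rightarrow> real"
  assumes "measure_pos \<mu>" "measure_pos \<mu>'" "1 \<le> p" "genus_family \<mu> p k \<noteq> {}"
  shows "genus_family \<mu>' p k \<noteq> {}"
proof -
  obtain B where B: "B \<in> genus_family \<mu> p k" using assms(4) by blast
  have "Sc \<mu>' p ` B \<in> genus_family \<mu>' p k"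
    using assms by (intro transfer_family[OF assms(3,1) _ _ _ B] Sc_cont)
      (auto simp: Sc_minus intro: Sc_sphere)
  thus ?thesis by blast
qed

lemma fam_props:
  fixes B :: "(real^'v) set"
  assumes "B \<in> genus_family \<mu> p k"
  shows "B \<noteq> {} \<and> B \<subseteq> sphere_p \<mu> p"
  using genus_family_nonempty[OF assms k1] assms unfolding genus_family_def by auto

lemma mm_mono:
  fixes \<mu> \<kappa> :: "'v \<Rightarrow> real" and w :: "'v \<Rightarrow> 'v \<Rightarrow> real"
  assumes "admissible_weight E w" "measure_pos \<mu>" "1 \<le> p" "p \<le> q" "genus_family \<mu> p k \<noteq> {}"
  shows "var_eigenvalue E \<sigma> w \<mu> (\<lambda>_. 0) q k \<le> 2 powr (q - p) * var_eigenvalue E \<sigma> w \<mu> (\<lambda>_. 0) p k"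
proof -
  have "var_eigenvalue E \<sigma> w \<mu> (\<lambda>_. 0) q k \<le> 2 powr (q - p) * var_eigenvalue E \<sigma> w \<mu> (\<lambda>_. 0) p k + 0"
    unfolding var_eigenvalue_def
  proof (rule mm_compare[where h = "Phi (p/q)" and Sa = "sphere_p \<mu> p" and Sb = "sphere_p \<mu> q"
        and lob = "- Kc \<mu> (\<lambda>_. 0)" and hib = "Hn E w \<mu> q + Kc \<mu> (\<lambda>_. 0)" and hia = "Hn E w \<mu> p + Kc \<mu> (\<lambda>_. 0)"])
    show "genus_family \<mu> p k \<noteq> {}" by fact
    show "\<forall>B\<in>genus_family \<mu> p k. Phi (p / q) ` B \<in> genus_family \<mu> q k"
      using assms by (auto intro!: transfer_family[OF assms(3,2)] Phi_cont simp: Phi_minus intro: Phi_sphere)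
    show "\<forall>B\<in>genus_family \<mu> q k. B \<noteq> {} \<and> B \<subseteq> sphere_p \<mu> q" using fam_props by blast
    show "\<forall>B\<in>genus_family \<mu> p k. B \<noteq> {} \<and> B \<subseteq> sphere_p \<mu> p" using fam_props by blast
    show "\<forall>x\<in>sphere_p \<mu> q. - Kc \<mu> (\<lambda>_. 0) \<le> rayleigh E \<sigma> w \<mu> (\<lambda>_. 0) q x \<and>
          rayleigh E \<sigma> w \<mu> (\<lambda>_. 0) q x \<le> Hn E w \<mu> q + Kc \<mu> (\<lambda>_. 0)"
      using rayleigh_bounds[OF sg assms(1,2)] assms(3,4) by auto
    show "\<forall>x\<in>sphere_p \<mu> p. rayleigh E \<sigma> w \<mu> (\<lambda>_. 0) p x \<le> Hn E w \<mu> p + Kc \<mu> (\<lambda>_. 0)"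
      using rayleigh_bounds[OF sg assms(1,2)] assms(3,4) by auto
    show "\<forall>x\<in>sphere_p \<mu> p. rayleigh E \<sigma> w \<mu> (\<lambda>_. 0) q (Phi (p / q) x)
          \<le> 2 powr (q - p) * rayleigh E \<sigma> w \<mu> (\<lambda>_. 0) p x + 0"
    proof
      fix x assume x: "x \<in> sphere_p \<mu> p"
      have "Phi (p/q) x \<in> sphere_p \<mu> q" using Phi_sphere[OF _ _ x] assms(3,4) by auto
      thus "rayleigh E \<sigma> w \<mu> (\<lambda>_. 0) q (Phi (p / q) x)
          \<le> 2 powr (q - p) * rayleigh E \<sigma> w \<mu> (\<lambda>_. 0) p x + 0"
        using rayleigh_sphere[OF x] rayleigh_sphere[of "Phi (p/q) x"] Phi_num[OF sg assms(1), of p q x] assms(3,4)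
        by simp
    qed
    show "0 < 2 powr (q - p)" by simp
  qed
  thus ?thesis by simp
qed

lemma mm_nonneg:
  fixes \<mu> \<kappa> :: "'v \<Rightarrow> real" and w :: "'v \<Rightarrow> 'v \<Rightarrow> real"
  assumes "admissible_weight E w" "measure_pos \<mu>" "1 \<le> p" "genus_family \<mu> p k \<noteq> {}"
  shows "0 \<le> var_eigenvalue E \<sigma> w \<mu> (\<lambda>_. 0) p k"
  unfolding var_eigenvalue_def
proof (rule mm_lower[where S = "sphere_p \<mu> p" and hi = "Hn E w \<mu> p"])
  show "genus_family \<mu> p k \<noteq> {}" by fact
  show "\<forall>B\<in>genus_family \<mu> p k. B \<noteq> {} \<and> B \<subseteq> sphere_p \<mu> p" using fam_props by blast
  show "\<forall>x\<in>sphere_p \<mu> p. 0 \<le> rayleigh E \<sigma> w \<mu> (\<lambda>_. 0) p x \<and> rayleigh E \<sigma> w \<mu> (\<lambda>_. 0) p x \<le> Hn E w \<mu> p"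
  proof
    fix x assume x: "x \<in> sphere_p \<mu> p"
    show "0 \<le> rayleigh E \<sigma> w \<mu> (\<lambda>_. 0) p x \<and> rayleigh E \<sigma> w \<mu> (\<lambda>_. 0) p x \<le> Hn E w \<mu> p"
      using rayleigh_sphere[OF x, of E \<sigma> w "\<lambda>_. 0"] num_nonneg[OF assms(1), of \<sigma> p x]
        num_upper[OF sg assms(1,2) x assms(3)] by simp
  qed
qed

lemma mm_kappa:
  fixes \<mu> \<kappa> :: "'v \<Rightarrow> real" and w :: "'v \<Rightarrow> 'v \<Rightarrow> real"
  assumes "admissible_weight E w" "measure_pos \<mu>" "1 \<le> p" "genus_family \<mu> p k \<noteq> {}"
  shows "\<bar>var_eigenvalue E \<sigma> w \<mu> \<kappa> p k - var_eigenvalue E \<sigma> w \<mu> (\<lambda>_. 0) p k\<bar> \<le> Kc \<mu> \<kappa>"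
proof -
  have bnd: "\<forall>x\<in>sphere_p \<mu> p. - Kc \<mu> kk \<le> rayleigh E \<sigma> w \<mu> kk p x \<and>
          rayleigh E \<sigma> w \<mu> kk p x \<le> Hn E w \<mu> p + Kc \<mu> kk" for kk
    using rayleigh_bounds[OF sg assms(1,2)] assms(3) by auto
  have idf: "\<forall>B\<in>genus_family \<mu> p k. id ` B \<in> genus_family \<mu> p k" by simp
  have fp: "\<forall>B\<in>genus_family \<mu> p k. B \<noteq> {} \<and> B \<subseteq> sphere_p \<mu> p" using fam_props by blast
  have diff: "\<forall>x\<in>sphere_p \<mu> p. \<bar>rayleigh E \<sigma> w \<mu> \<kappa> p x - rayleigh E \<sigma> w \<mu> (\<lambda>_. 0) p x\<bar> \<le> Kc \<mu> \<kappa>"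
  proof
    fix x assume x: "x \<in> sphere_p \<mu> p"
    show "\<bar>rayleigh E \<sigma> w \<mu> \<kappa> p x - rayleigh E \<sigma> w \<mu> (\<lambda>_. 0) p x\<bar> \<le> Kc \<mu> \<kappa>"
      using rayleigh_sphere[OF x, of E \<sigma> w \<kappa>] rayleigh_sphere[OF x, of E \<sigma> w "\<lambda>_. 0"]
        ksum_bound[OF assms(2) x, of \<kappa>] by simp
  qed
  have "var_eigenvalue E \<sigma> w \<mu> \<kappa> p k \<le> 1 * var_eigenvalue E \<sigma> w \<mu> (\<lambda>_. 0) p k + Kc \<mu> \<kappa>"
    unfolding var_eigenvalue_def
    by (rule mm_compare[OF assms(4) idf fp bnd fp]) (use bnd diff in \<open>auto simp: abs_le_iff\<close>)
  moreover have "var_eigenvalue E \<sigma> w \<mu> (\<lambda>_. 0) p k \<le> 1 * var_eigenvalue E \<sigma> w \<mu> \<kappa> p k + Kc \<mu> \<kappa>"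
    unfolding var_eigenvalue_def
    by (rule mm_compare[OF assms(4) idf fp bnd fp]) (use bnd diff in \<open>auto simp: abs_le_iff\<close>)
  ultimately show ?thesis by simp
qed

lemma mm_w:
  fixes \<mu> \<mu>' :: "'v \<Rightarrow> real" and w w' :: "'v \<Rightarrow> 'v \<Rightarrow> real"
  assumes "admissible_weight E w" "admissible_weight E w'" "measure_pos \<mu>" "measure_pos \<mu>'"
    "1 \<le> p" "genus_family \<mu> p k \<noteq> {}"
  shows "var_eigenvalue E \<sigma> w' \<mu>' (\<lambda>_. 0) p k \<le> (cw E w w' / cmu \<mu> \<mu>') * var_eigenvalue E \<sigma> w \<mu> (\<lambda>_. 0) p k"
proof -
  have "var_eigenvalue E \<sigma> w' \<mu>' (\<lambda>_. 0) p k \<le> (cw E w w' / cmu \<mu> \<mu>') * var_eigenvalue E \<sigma> w \<mu> (\<lambda>_. 0) p k + 0"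
    unfolding var_eigenvalue_def
  proof (rule mm_compare[where h = "Sc \<mu>' p" and Sa = "sphere_p \<mu> p" and Sb = "sphere_p \<mu>' p"
        and lob = "- Kc \<mu>' (\<lambda>_. 0)" and hib = "Hn E w' \<mu>' p + Kc \<mu>' (\<lambda>_. 0)" and hia = "Hn E w \<mu> p + Kc \<mu> (\<lambda>_. 0)"])
    show "genus_family \<mu> p k \<noteq> {}" by fact
    show "\<forall>B\<in>genus_family \<mu> p k. Sc \<mu>' p ` B \<in> genus_family \<mu>' p k"
      using assms by (auto intro!: transfer_family[OF assms(5,3)] Sc_cont simp: Sc_minus intro: Sc_sphere)
    show "\<forall>B\<in>genus_family \<mu>' p k. B \<noteq> {} \<and> B \<subseteq> sphere_p \<mu>' p" using fam_props by blast
    show "\<forall>B\<in>genus_family \<mu> p k. B \<noteq> {} \<and> B \<subseteq> sphere_p \<mu> p" using fam_props by blast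
    show "\<forall>x\<in>sphere_p \<mu>' p. - Kc \<mu>' (\<lambda>_. 0) \<le> rayleigh E \<sigma> w' \<mu>' (\<lambda>_. 0) p x \<and>
          rayleigh E \<sigma> w' \<mu>' (\<lambda>_. 0) p x \<le> Hn E w' \<mu>' p + Kc \<mu>' (\<lambda>_. 0)"
      using rayleigh_bounds[OF sg assms(2,4)] assms(5) by auto
    show "\<forall>x\<in>sphere_p \<mu> p. rayleigh E \<sigma> w \<mu> (\<lambda>_. 0) p x \<le> Hn E w \<mu> p + Kc \<mu> (\<lambda>_. 0)"
      using rayleigh_bounds[OF sg assms(1,3)] assms(5) by auto
    show "\<forall>x\<in>sphere_p \<mu> p. rayleigh E \<sigma> w' \<mu>' (\<lambda>_. 0) p (Sc \<mu>' p x)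
          \<le> (cw E w w' / cmu \<mu> \<mu>') * rayleigh E \<sigma> w \<mu> (\<lambda>_. 0) p x + 0"
      using Sc_rayleigh[OF assms(1-4)] assms(5) by simp
    show "0 < cw E w w' / cmu \<mu> \<mu>'" using cw_pos[OF assms(1,2)] cmu_pos[OF assms(3,4)] by simp
  qed
  thus ?thesis by simp
qed

end



context
  fixes E :: "('v::finite \<times> 'v) set" and \<sigma> :: "'v \<Rightarrow> 'v \<Rightarrow> real" and k :: nat
  assumes sg: "signed_graph E \<sigma>" and k1: "1 \<le> k"
begin

lemma limit_exists:
  fixes \<mu> \<kappa> :: "'v \<Rightarrow> real" and w :: "'v \<Rightarrow> 'v \<Rightarrow> real"
  assumes "admissible_weight E w" "measure_pos \<mu>" "1 \<le> p0" "genus_family \<mu> p0 k \<noteq> {}"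
  shows "\<exists>L\<ge>0. ((\<lambda>p. 2 powr (-p) * var_eigenvalue E \<sigma> w \<mu> (\<lambda>_. 0) p k) \<longlongrightarrow> L) at_top
            \<and> cutoff_eigenvalue E \<sigma> w \<mu> \<kappa> k = L"
proof -
  define h where "h p = 2 powr (-p) * var_eigenvalue E \<sigma> w \<mu> (\<lambda>_. 0) p k" for p
  define g where "g p = 2 powr (-p) * var_eigenvalue E \<sigma> w \<mu> \<kappa> p k" for p
  have ne: "genus_family \<mu> p k \<noteq> {}" if "p0 \<le> p" for p
    using fam_mono_p[OF sg k1 assms(2,3) that assms(4)] .
  have mono: "h q \<le> h p" if "p0 \<le> p" "p \<le> q" for p q
  proof -
    have "h q \<le> 2 powr (-q) * (2 powr (q - p) * var_eigenvalue E \<sigma> w \<mu> (\<lambda>_. 0) p k)"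
      unfolding h_def using mm_mono[OF sg k1 assms(1,2) _ that(2) ne[OF that(1)]] that assms(3)
      by (intro mult_left_mono) auto
    also have "\<dots> = h p" unfolding h_def by (simp add: mult.assoc[symmetric] powr_add[symmetric])
    finally show ?thesis .
  qed
  have nn: "0 \<le> h p" if "p0 \<le> p" for p
    unfolding h_def using mm_nonneg[OF sg k1 assms(1,2) _ ne[OF that]] that assms(3) by simp
  obtain L where L: "(h \<longlongrightarrow> L) at_top" "0 \<le> L" using mono_lim[of p0 h] mono nn by blast
  have "((\<lambda>p. g p - h p) \<longlongrightarrow> 0) at_top"
  proof (rule Lim_null_comparison)
    show "eventually (\<lambda>p. norm (g p - h p) \<le> 2 powr (-p) * Kc \<mu> \<kappa>) at_top"
    proof (rule eventually_at_top_linorderI[of p0])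
      fix p assume p: "p0 \<le> p"
      have "norm (g p - h p) = 2 powr (-p) * \<bar>var_eigenvalue E \<sigma> w \<mu> \<kappa> p k - var_eigenvalue E \<sigma> w \<mu> (\<lambda>_. 0) p k\<bar>"
        unfolding g_def h_def by (simp add: abs_mult right_diff_distrib[symmetric])
      also have "\<dots> \<le> 2 powr (-p) * Kc \<mu> \<kappa>"
        using mm_kappa[OF sg k1 assms(1,2) _ ne[OF p]] p assms(3) by (intro mult_left_mono) auto
      finally show "norm (g p - h p) \<le> 2 powr (-p) * Kc \<mu> \<kappa>" .
    qed
    show "((\<lambda>p. 2 powr (-p) * Kc \<mu> \<kappa>) \<longlongrightarrow> 0) at_top"
      using tendsto_mult_left_zero[OF two_powr_neg_lim] by simp
  qed
  hence "((\<lambda>p. h p + (g p - h p)) \<longlongrightarrow> L + 0) at_top" using L(1) by (intro tendsto_add)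
  hence "(g \<longlongrightarrow> L) at_top" by simp
  hence "cutoff_eigenvalue E \<sigma> w \<mu> \<kappa> k = L"
    unfolding cutoff_eigenvalue_def g_def[symmetric] by (intro tendsto_Lim) auto
  thus ?thesis using L unfolding h_def by blast
qed

lemma empty_case:
  fixes \<mu> \<kappa> :: "'v \<Rightarrow> real" and w :: "'v \<Rightarrow> 'v \<Rightarrow> real"
  assumes "\<forall>p\<ge>1. genus_family \<mu> p k = {}"
  shows "cutoff_eigenvalue E \<sigma> w \<mu> \<kappa> k = 0"
proof -
  have "eventually (\<lambda>p. 2 powr (-p) * Inf {} = 2 powr (-p) * var_eigenvalue E \<sigma> w \<mu> \<kappa> p k) at_top"
    using eventually_ge_at_top[of 1] by eventually_elim (use assms in \<open>simp add: var_eigenvalue_def\<close>)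
  moreover have "((\<lambda>p. 2 powr (-p) * (Inf {} :: real)) \<longlongrightarrow> 0) at_top"
    using tendsto_mult_left_zero[OF two_powr_neg_lim] by simp
  ultimately have "((\<lambda>p. 2 powr (-p) * var_eigenvalue E \<sigma> w \<mu> \<kappa> p k) \<longlongrightarrow> 0) at_top"
    by (rule Lim_transform_eventually[rotated])
  thus ?thesis unfolding cutoff_eigenvalue_def by (intro tendsto_Lim) auto
qed

lemma zero_iff:
  fixes \<mu> \<mu>' \<kappa> \<kappa>' :: "'v \<Rightarrow> real" and w w' :: "'v \<Rightarrow> 'v \<Rightarrow> real"
  assumes "admissible_weight E w" "admissible_weight E w'" "measure_pos \<mu>" "measure_pos \<mu>'"
  shows "cutoff_eigenvalue E \<sigma> w \<mu> \<kappa> k = 0 \<longleftrightarrow> cutoff_eigenvalue E \<sigma> w' \<mu>' \<kappa>' k = 0"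
proof (cases "\<exists>p0\<ge>1. genus_family \<mu> p0 k \<noteq> {}")
  case True
  then obtain p0 where p0: "1 \<le> p0" "genus_family \<mu> p0 k \<noteq> {}" by blast
  have p0': "genus_family \<mu>' p0 k \<noteq> {}" using fam_mu[OF sg k1 assms(3,4) p0] .
  have ne: "genus_family \<mu> p k \<noteq> {}" if "p0 \<le> p" for p
    using fam_mono_p[OF sg k1 assms(3) p0(1) that p0(2)] .
  have ne': "genus_family \<mu>' p k \<noteq> {}" if "p0 \<le> p" for p
    using fam_mono_p[OF sg k1 assms(4) p0(1) that p0'] .
  obtain L where L: "L \<ge> 0" "((\<lambda>p. 2 powr (-p) * var_eigenvalue E \<sigma> w \<mu> (\<lambda>_. 0) p k) \<longlongrightarrow> L) at_top"
      "cutoff_eigenvalue E \<sigma> w \<mu> \<kappa> k = L"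
    using limit_exists[OF assms(1,3) p0] by blast
  obtain L' where L': "L' \<ge> 0" "((\<lambda>p. 2 powr (-p) * var_eigenvalue E \<sigma> w' \<mu>' (\<lambda>_. 0) p k) \<longlongrightarrow> L') at_top"
      "cutoff_eigenvalue E \<sigma> w' \<mu>' \<kappa>' k = L'"
    using limit_exists[OF assms(2,4) p0(1) p0'] by blast
  define C where "C = cw E w w' / cmu \<mu> \<mu>'"
  define C' where "C' = cw E w' w / cmu \<mu>' \<mu>"
  have "L' \<le> C * L"
  proof (rule tendsto_le[OF _ tendsto_mult_left[OF L(2)] L'(2)])
    show "eventually (\<lambda>p. 2 powr (-p) * var_eigenvalue E \<sigma> w' \<mu>' (\<lambda>_. 0) p k
        \<le> C * (2 powr (-p) * var_eigenvalue E \<sigma> w \<mu> (\<lambda>_. 0) p k)) at_top"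
    proof (rule eventually_at_top_linorderI[of p0])
      fix p assume p: "p0 \<le> p"
      have "2 powr (-p) * var_eigenvalue E \<sigma> w' \<mu>' (\<lambda>_. 0) p k \<le> 2 powr (-p) * (C * var_eigenvalue E \<sigma> w \<mu> (\<lambda>_. 0) p k)"
        using mm_w[OF sg k1 assms(1-4) _ ne[OF p]] p p0(1) unfolding C_def by (intro mult_left_mono) auto
      thus "2 powr (-p) * var_eigenvalue E \<sigma> w' \<mu>' (\<lambda>_. 0) p k
        \<le> C * (2 powr (-p) * var_eigenvalue E \<sigma> w \<mu> (\<lambda>_. 0) p k)" by (simp add: algebra_simps)
    qed
  qed simp
  moreover have "L \<le> C' * L'"
  proof (rule tendsto_le[OF _ tendsto_mult_left[OF L'(2)] L(2)])
    show "eventually (\<lambda>p. 2 powr (-p) * var_eigenvalue E \<sigma> w \<mu> (\<lambda>_. 0) p k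
        \<le> C' * (2 powr (-p) * var_eigenvalue E \<sigma> w' \<mu>' (\<lambda>_. 0) p k)) at_top"
    proof (rule eventually_at_top_linorderI[of p0])
      fix p assume p: "p0 \<le> p"
      have "2 powr (-p) * var_eigenvalue E \<sigma> w \<mu> (\<lambda>_. 0) p k \<le> 2 powr (-p) * (C' * var_eigenvalue E \<sigma> w' \<mu>' (\<lambda>_. 0) p k)"
        using mm_w[OF sg k1 assms(2,1,4,3) _ ne'[OF p]] p p0(1) unfolding C'_def by (intro mult_left_mono) auto
      thus "2 powr (-p) * var_eigenvalue E \<sigma> w \<mu> (\<lambda>_. 0) p k
        \<le> C' * (2 powr (-p) * var_eigenvalue E \<sigma> w' \<mu>' (\<lambda>_. 0) p k)" by (simp add: algebra_simps)
    qed
  qed simp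
  ultimately show ?thesis using L(1,3) L'(1,3) by (auto simp: mult_le_0_iff)
next
  case False
  hence e1: "\<forall>p\<ge>1. genus_family \<mu> p k = {}" by blast
  have e2: "\<forall>p\<ge>1. genus_family \<mu>' p k = {}"
    using fam_mu[OF sg k1 assms(4,3)] e1 by blast
  show ?thesis using empty_case[OF e1] empty_case[OF e2] by simp
qed

end

theorem proposition6p4:
  fixes E :: "('v::finite \<times> 'v) set"
    and \<sigma> w w' :: "'v \<Rightarrow> 'v \<Rightarrow> real"
    and \<mu> \<mu>' \<kappa> \<kappa>' :: "'v \<Rightarrow> real"
  assumes "signed_graph E \<sigma>"
    and "admissible_weight E w" and "admissible_weight E w'"
    and "measure_pos \<mu>" and "measure_pos \<mu>'"
  shows "card {k \<in> {1..CARD('v)}. cutoff_eigenvalue E \<sigma> w \<mu> \<kappa> k = 0}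
       = card {k \<in> {1..CARD('v)}. cutoff_eigenvalue E \<sigma> w' \<mu>' \<kappa>' k = 0}"
proof -
  have "{k \<in> {1..CARD('v)}. cutoff_eigenvalue E \<sigma> w \<mu> \<kappa> k = 0}
       = {k \<in> {1..CARD('v)}. cutoff_eigenvalue E \<sigma> w' \<mu>' \<kappa>' k = 0}"
    using zero_iff[OF assms(1) _ assms(2-5)] by auto
  thus ?thesis by simp
qed


end
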